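(* Let $X_1,X_2$ be sets, $H_1$ a group acting transitively on $X_1$, $H_2$ an abelian group (written additively) acting on $X_2$, and $H_2'$ a subgroup of $H_2$. Put $X_2'=\{y\in X_2 : \text{for } g\in H_2,\ g\cdot y=y \iff g\in H_2'\}$ and $X=X_1\times X_2'$. Let $\varGamma_1:H_1\times X\to X$, $\varGamma_1(g,(x_1,x_2))=(g\cdot x_1,x_2)$. Let $\varphi:H_2\times X_1\times X_2'\to X_1$ be a map with $\varphi(0,x_1,x_2)=x_1$ and $\varphi(g+h,x_1,x_2)=\varphi(h,\varphi(g,x_1,x_2),g\cdot x_2)$ for all $g,h\in H_2$, and define the action $\varGamma_2:H_2\times X\to X$, $\varGamma_2(g,(x_1,x_2))=(\varphi(g,x_1,x_2),g\cdot x_2)$. Let $G_1=\rho_{\varGamma_1}(H_1)$, $G_2=\rho_{\varGamma_2}(H_2)\subset\mathfrak S(X)$ and assume every element of $G_1$ commutes with every element of $G_2$. Let $x=(x_1^0,x_2^0)\in X$. Then there is a bijection between $G_1\cdot[x]_{G_2}\subset G_2\backslash X$ and the orbit set $H_2'\backslash X_1$ of the action of $H_2'$ on $X_1$ given by $g\cdot y=\varphi(g,y,x_2^0)$, and this bijection commutes with the action of $G_1$ (equivalently of $H_1$), where $H_1$ acts on $G_2\backslash X$ by $h\cdot[z]_{G_2}=[\varGamma_1(h,z)]_{G_2}$ and on $H_2'\backslash X_1$ by $h\cdot[y]=[h\cdot y]$.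
   Context: $\mathfrak S(X)$ is the group of bijections of $X$; for an action $\varGamma$ of a group $K$ on $X$, $\rho_\varGamma:K\to\mathfrak S(X)$ is its permutation representation, $\rho_\varGamma(k)(x)=\varGamma(k,x)$. For a group $K$ acting on $Y$, $K\backslash Y$ is the set of orbits and $[y]_K$ the orbit of $y$. Since $H_2'$ fixes $x_2^0$, the formula $g\cdot y=\varphi(g,y,x_2^0)$ ($g\in H_2'$) defines an action of $H_2'$ on $X_1$, and the $H_1$ action on $H_2'\backslash X_1$ is well defined because $G_1$ and $G_2$ commute. *)

theory Defs
  imports "HOL-Algebra.Group_Action"
begin

text \<open>Permutation representation of an action Gamma of K on X, as a set of
  (extensional) maps on X: the image rho_Gamma(K).\<close>
definition perm_rep :: "('k, 'm) monoid_scheme \<Rightarrow> ('k \<Rightarrow> 'x \<Rightarrow> 'x) \<Rightarrow> 'x set \<Rightarrow> ('x \<Rightarrow> 'x) set" where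
  "perm_rep K Gam X = (\<lambda>k. restrict (Gam k) X) ` carrier K"

definition perm_orbit :: "('x \<Rightarrow> 'x) set \<Rightarrow> 'x \<Rightarrow> 'x set" where
  "perm_orbit S z = {\<sigma> z | \<sigma>. \<sigma> \<in> S}"

definition perm_orbits :: "('x \<Rightarrow> 'x) set \<Rightarrow> 'x set \<Rightarrow> 'x set set" where
  "perm_orbits S X = perm_orbit S ` X"

definition orbit_act :: "('x \<Rightarrow> 'x set) \<Rightarrow> ('h \<Rightarrow> 'x \<Rightarrow> 'x) \<Rightarrow> 'h \<Rightarrow> 'x set \<Rightarrow> 'x set" where
  "orbit_act orb f h Q = orb (f h (SOME z. z \<in> Q))"

end

theory Submission
  imports Defs
begin

theorem mainTheorem3:
  fixes H1 :: "('g1, 'm1) monoid_scheme" and H2 :: "('g2, 'm2) monoid_scheme"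
    and X1 :: "'x1 set" and X2 :: "'x2 set"
    and act1 :: "'g1 \<Rightarrow> 'x1 \<Rightarrow> 'x1" and act2 :: "'g2 \<Rightarrow> 'x2 \<Rightarrow> 'x2"
    and H2' :: "'g2 set"
    and \<phi> :: "'g2 \<Rightarrow> 'x1 \<Rightarrow> 'x2 \<Rightarrow> 'x1"
    and x10 :: 'x1 and x20 :: 'x2
  defines "X2' \<equiv> {y \<in> X2. \<forall>g \<in> carrier H2. act2 g y = y \<longleftrightarrow> g \<in> H2'}"
  defines "X \<equiv> X1 \<times> X2'"
  defines "\<Gamma>1 \<equiv> (\<lambda>g (z1, z2). (act1 g z1, z2))"
  defines "\<Gamma>2 \<equiv> (\<lambda>g (z1, z2). (\<phi> g z1 z2, act2 g z2))"
  defines "G1 \<equiv> perm_rep H1 \<Gamma>1 X"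
  defines "G2 \<equiv> perm_rep H2 \<Gamma>2 X"
  defines "H2'grp \<equiv> H2\<lparr>carrier := H2'\<rparr>"
  defines "\<psi> \<equiv> (\<lambda>g. \<lambda>y \<in> X1. \<phi> g y x20)"
  assumes "transitive_action H1 X1 act1"
    and "comm_group H2"
    and "group_action H2 X2 act2"
    and "subgroup H2' H2"
    and "\<And>g x1 x2. g \<in> carrier H2 \<Longrightarrow> x1 \<in> X1 \<Longrightarrow> x2 \<in> X2' \<Longrightarrow> \<phi> g x1 x2 \<in> X1"
    and "\<And>x1 x2. x1 \<in> X1 \<Longrightarrow> x2 \<in> X2' \<Longrightarrow> \<phi> \<one>\<^bsub>H2\<^esub> x1 x2 = x1"
    and "\<And>g h x1 x2. g \<in> carrier H2 \<Longrightarrow> h \<in> carrier H2 \<Longrightarrow> x1 \<in> X1 \<Longrightarrow> x2 \<in> X2' \<Longrightarrow>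
           \<phi> (g \<otimes>\<^bsub>H2\<^esub> h) x1 x2 = \<phi> h (\<phi> g x1 x2) (act2 g x2)"
    and "\<forall>\<sigma> \<in> G1. \<forall>\<tau> \<in> G2. \<forall>z \<in> X. \<sigma> (\<tau> z) = \<tau> (\<sigma> z)"
    and "(x10, x20) \<in> X"
  shows "\<exists>F. bij_betw F {perm_orbit G2 (\<sigma> (x10, x20)) | \<sigma>. \<sigma> \<in> G1} (orbits H2'grp X1 \<psi>)
           \<and> (\<forall>h \<in> carrier H1. \<forall>Q \<in> {perm_orbit G2 (\<sigma> (x10, x20)) | \<sigma>. \<sigma> \<in> G1}.
                F (orbit_act (perm_orbit G2) \<Gamma>1 h Q) = orbit_act (orbit H2'grp \<psi>) act1 h (F Q))"
proof -
  note A = assms(9-17)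
  have x20: "x20 \<in> X2'" and x10: "x10 \<in> X1" using A(9) unfolding X_def by auto
  interpret T: transitive_action H1 X1 act1 by (rule A(1))
  interpret C: comm_group H2 by (rule A(2))
  interpret S: group_action H2 X2 act2 by (rule A(3))
  have sub: "H2' \<subseteq> carrier H2" using A(4) subgroup.subset by blast
  have inv2: "act2 g x \<in> X2'" if gc: "g \<in> carrier H2" and "x \<in> X2'" for g x
  proof -
    have xX: "x \<in> X2" using that unfolding X2'_def by auto
    have "act2 h (act2 g x) = act2 g x \<longleftrightarrow> h \<in> H2'" if h: "h \<in> carrier H2" for h
    proof -
      have "act2 h (act2 g x) = act2 (h \<otimes>\<^bsub>H2\<^esub> g) x" using S.composition_rule xX h gc by simp
      also have "\<dots> = act2 g (act2 h x)" using S.composition_rule xX h \<open>g \<in> carrier H2\<close> C.m_comm by metis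
      finally have e: "act2 h (act2 g x) = act2 g (act2 h x)" .
      have "act2 h x \<in> X2" using S.element_image h xX by blast
      hence "act2 g (act2 h x) = act2 g x \<longleftrightarrow> act2 h x = x"
        using S.inj_prop[OF \<open>g \<in> carrier H2\<close>] xX by (metis inj_on_eq_iff)
      thus ?thesis using e \<open>x \<in> X2'\<close> h unfolding X2'_def by auto
    qed
    moreover have "act2 g x \<in> X2" using S.element_image that xX by blast
    ultimately show ?thesis unfolding X2'_def by auto
  qed
  have G2inX: "\<Gamma>2 g z \<in> X" if "g \<in> carrier H2" "z \<in> X" for g z
    using that A(5) inv2 unfolding X_def \<Gamma>2_def by auto
  have comp: "\<Gamma>2 k (\<Gamma>2 g z) = \<Gamma>2 (g \<otimes>\<^bsub>H2\<^esub> k) z" if gk: "g \<in> carrier H2" "k \<in> carrier H2" and zX: "z \<in> X" for g k z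
  proof -
    obtain a b where z: "z = (a, b)" "a \<in> X1" "b \<in> X2'" using zX unfolding X_def by auto
    have bX: "b \<in> X2" using z unfolding X2'_def by auto
    have "act2 (g \<otimes>\<^bsub>H2\<^esub> k) b = act2 k (act2 g b)"
      using S.composition_rule[OF bX gk(2,1)] C.m_comm gk by metis
    thus ?thesis using z A(7)[OF gk(1,2) z(2,3)] unfolding \<Gamma>2_def by simp
  qed
  have orbX: "perm_orbit G2 z = {\<Gamma>2 g z | g. g \<in> carrier H2}" if "z \<in> X" for z
    using that unfolding perm_orbit_def G2_def perm_rep_def
    by (auto, metis image_eqI restrict_apply')
  have orbeq: "perm_orbit G2 (\<Gamma>2 g z) = perm_orbit G2 z" if "g \<in> carrier H2" "z \<in> X" for g z
  proof -
    have "{\<Gamma>2 k (\<Gamma>2 g z) | k. k \<in> carrier H2} = {\<Gamma>2 k z | k. k \<in> carrier H2}"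
    proof (intro equalityI subsetI)
      fix w assume "w \<in> {\<Gamma>2 k (\<Gamma>2 g z) | k. k \<in> carrier H2}"
      then obtain k where "k \<in> carrier H2" "w = \<Gamma>2 k (\<Gamma>2 g z)" by auto
      thus "w \<in> {\<Gamma>2 k z | k. k \<in> carrier H2}" using comp that by auto
    next
      fix w assume "w \<in> {\<Gamma>2 k z | k. k \<in> carrier H2}"
      then obtain k where k: "k \<in> carrier H2" "w = \<Gamma>2 k z" by auto
      have "\<Gamma>2 (inv\<^bsub>H2\<^esub> g \<otimes>\<^bsub>H2\<^esub> k) (\<Gamma>2 g z) = \<Gamma>2 (g \<otimes>\<^bsub>H2\<^esub> (inv\<^bsub>H2\<^esub> g \<otimes>\<^bsub>H2\<^esub> k)) z"
        using comp that k by auto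
      also have "g \<otimes>\<^bsub>H2\<^esub> (inv\<^bsub>H2\<^esub> g \<otimes>\<^bsub>H2\<^esub> k) = k"
        using that k by (simp add: C.m_assoc[symmetric])
      finally have "\<Gamma>2 (inv\<^bsub>H2\<^esub> g \<otimes>\<^bsub>H2\<^esub> k) (\<Gamma>2 g z) = w" using k by simp
      moreover have "inv\<^bsub>H2\<^esub> g \<otimes>\<^bsub>H2\<^esub> k \<in> carrier H2" using k that by simp
      ultimately show "w \<in> {\<Gamma>2 k (\<Gamma>2 g z) | k. k \<in> carrier H2}" by blast
    qed
    thus ?thesis using orbX that G2inX by simp
  qed
  define F where "F = (\<lambda>Q::('x1 \<times> 'x2) set. {y. (y, x20) \<in> Q})"
  have key: "F (perm_orbit G2 (y, x20)) = orbit H2'grp \<psi> y" if y: "y \<in> X1" for y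
  proof -
    have yX: "(y, x20) \<in> X" using y x20 unfolding X_def by auto
    have "F (perm_orbit G2 (y, x20)) = {y'. \<exists>g \<in> carrier H2. y' = \<phi> g y x20 \<and> act2 g x20 = x20}"
      unfolding F_def orbX[OF yX] \<Gamma>2_def by auto
    also have "\<dots> = {\<phi> g y x20 | g. g \<in> H2'}"
      using x20 sub unfolding X2'_def by auto
    also have "\<dots> = orbit H2'grp \<psi> y"
      unfolding orbit_def H2'grp_def \<psi>_def using y by auto
    finally show ?thesis .
  qed
  have orb\<psi>: "orbit H2'grp \<psi> (\<phi> g y x20) = orbit H2'grp \<psi> y" if "g \<in> H2'" "y \<in> X1" for g y
  proof -
    have yX: "(y, x20) \<in> X" using that x20 unfolding X_def by auto
    have "act2 g x20 = x20" using x20 that sub unfolding X2'_def by auto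
    hence "\<Gamma>2 g (y, x20) = (\<phi> g y x20, x20)" unfolding \<Gamma>2_def by simp
    moreover have "\<phi> g y x20 \<in> X1" using A(5) that sub x20 by auto
    ultimately have "orbit H2'grp \<psi> (\<phi> g y x20) = F (perm_orbit G2 (\<Gamma>2 g (y, x20)))" using key by simp
    also have "\<dots> = F (perm_orbit G2 (y, x20))" using orbeq[of g "(y,x20)"] that sub yX by auto
    finally show ?thesis using key that by simp
  qed
  have commute: "\<Gamma>1 h (\<Gamma>2 g z) = \<Gamma>2 g (\<Gamma>1 h z)" if "h \<in> carrier H1" "g \<in> carrier H2" "z \<in> X" for h g z
  proof -
    have z1: "\<Gamma>1 h z \<in> X" using that T.element_image unfolding X_def \<Gamma>1_def by auto
    have "restrict (\<Gamma>1 h) X \<in> G1" unfolding G1_def perm_rep_def using that by auto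
    moreover have "restrict (\<Gamma>2 g) X \<in> G2" unfolding G2_def perm_rep_def using that by auto
    ultimately have "restrict (\<Gamma>1 h) X (restrict (\<Gamma>2 g) X z) = restrict (\<Gamma>2 g) X (restrict (\<Gamma>1 h) X z)"
      using A(8) that by blast
    thus ?thesis using that z1 G2inX by simp
  qed
  let ?D = "{perm_orbit G2 (\<sigma> (x10, x20)) | \<sigma>. \<sigma> \<in> G1}"
  have D: "?D = {perm_orbit G2 (act1 h x10, x20) | h. h \<in> carrier H1}"
  proof (intro equalityI subsetI)
    fix Q assume "Q \<in> ?D"
    then obtain h where "h \<in> carrier H1" "Q = perm_orbit G2 (restrict (\<Gamma>1 h) X (x10, x20))"
      unfolding G1_def perm_rep_def by auto
    thus "Q \<in> {perm_orbit G2 (act1 h x10, x20) | h. h \<in> carrier H1}"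
      using A(9) unfolding \<Gamma>1_def by auto
  next
    fix Q assume "Q \<in> {perm_orbit G2 (act1 h x10, x20) | h. h \<in> carrier H1}"
    then obtain h where h: "h \<in> carrier H1" "Q = perm_orbit G2 (act1 h x10, x20)" by auto
    hence "Q = perm_orbit G2 (restrict (\<Gamma>1 h) X (x10, x20))" "restrict (\<Gamma>1 h) X \<in> G1"
      using A(9) unfolding \<Gamma>1_def G1_def perm_rep_def by auto
    thus "Q \<in> ?D" by blast
  qed
  have D2: "?D = {perm_orbit G2 (y, x20) | y. y \<in> X1}"
  proof -
    have "{perm_orbit G2 (act1 h x10, x20) | h. h \<in> carrier H1} = {perm_orbit G2 (y, x20) | y. y \<in> X1}"
    proof (intro equalityI subsetI)
      fix Q assume "Q \<in> {perm_orbit G2 (act1 h x10, x20) | h. h \<in> carrier H1}"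
      thus "Q \<in> {perm_orbit G2 (y, x20) | y. y \<in> X1}" using T.element_image x10 by blast
    next
      fix Q assume "Q \<in> {perm_orbit G2 (y, x20) | y. y \<in> X1}"
      then obtain y where "y \<in> X1" "Q = perm_orbit G2 (y, x20)" by auto
      moreover obtain h where "h \<in> carrier H1" "act1 h x10 = y" using T.unique_orbit x10 \<open>y \<in> X1\<close> by blast
      ultimately show "Q \<in> {perm_orbit G2 (act1 h x10, x20) | h. h \<in> carrier H1}" by blast
    qed
    thus ?thesis using D by simp
  qed
  have bij: "bij_betw F ?D (orbits H2'grp X1 \<psi>)"
  proof (rule bij_betw_imageI)
    show "inj_on F ?D"
    proof (rule inj_onI)
      fix Q Q' assume "Q \<in> ?D" "Q' \<in> ?D" and e: "F Q = F Q'"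
      then obtain y y' where y: "y \<in> X1" "Q = perm_orbit G2 (y, x20)"
        and y': "y' \<in> X1" "Q' = perm_orbit G2 (y', x20)" unfolding D2 by auto
      have oe: "orbit H2'grp \<psi> y = orbit H2'grp \<psi> y'" using e key y y' by simp
      have "\<one>\<^bsub>H2\<^esub> \<in> H2'" using A(4) subgroup.one_closed by blast
      hence "\<psi> \<one>\<^bsub>H2\<^esub> y' \<in> orbit H2'grp \<psi> y'" unfolding orbit_def H2'grp_def by auto
      hence "y' \<in> orbit H2'grp \<psi> y" using oe A(6) y' x20 unfolding \<psi>_def by simp
      then obtain g where g: "g \<in> H2'" "y' = \<phi> g y x20"
        unfolding orbit_def H2'grp_def \<psi>_def using y by auto
      have "act2 g x20 = x20" using x20 g sub unfolding X2'_def by auto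
      hence "(y', x20) = \<Gamma>2 g (y, x20)" using g unfolding \<Gamma>2_def by simp
      thus "Q = Q'" using orbeq[of g "(y, x20)"] g sub y y' x20 unfolding X_def by auto
    qed
    show "F ` ?D = orbits H2'grp X1 \<psi>"
      unfolding D2 orbits_def using key by auto
  qed
  have eqv: "F (orbit_act (perm_orbit G2) \<Gamma>1 h Q) = orbit_act (orbit H2'grp \<psi>) act1 h (F Q)"
    if h: "h \<in> carrier H1" and Q: "Q \<in> ?D" for h Q
  proof -
    obtain y where y: "y \<in> X1" "Q = perm_orbit G2 (y, x20)" using Q unfolding D2 by auto
    have yX: "(y, x20) \<in> X" using y x20 unfolding X_def by auto
    have hy: "act1 h y \<in> X1" using T.element_image h y by blast
    have hyX: "(act1 h y, x20) \<in> X" using hy x20 unfolding X_def by auto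
    have one': "\<one>\<^bsub>H2\<^esub> \<in> H2'" using A(4) subgroup.one_closed by blast
    hence "act2 \<one>\<^bsub>H2\<^esub> x20 = x20" using x20 unfolding X2'_def by auto
    hence "\<Gamma>2 \<one>\<^bsub>H2\<^esub> (y, x20) = (y, x20)" using A(6)[OF y(1) x20] unfolding \<Gamma>2_def by simp
    hence "(y, x20) \<in> Q" using y orbX[OF yX] by (metis (mono_tags, lifting) C.one_closed mem_Collect_eq)
    hence "(SOME z. z \<in> Q) \<in> Q" by (rule someI)
    then obtain g where g: "g \<in> carrier H2" "(SOME z. z \<in> Q) = \<Gamma>2 g (y, x20)"
      using y orbX[OF yX] by auto
    have "\<Gamma>1 h (\<Gamma>2 g (y, x20)) = \<Gamma>2 g (act1 h y, x20)"
      using commute[OF h g(1) yX] unfolding \<Gamma>1_def by simp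
    hence L: "F (orbit_act (perm_orbit G2) \<Gamma>1 h Q) = orbit H2'grp \<psi> (act1 h y)"
      unfolding orbit_act_def using g orbeq[OF g(1) hyX] key[OF hy] by simp
    have FQ: "F Q = orbit H2'grp \<psi> y" using key y by simp
    have "y \<in> orbit H2'grp \<psi> y"
    proof -
      have "\<one>\<^bsub>H2\<^esub> \<in> H2'" using A(4) subgroup.one_closed by blast
      thus ?thesis unfolding orbit_def H2'grp_def \<psi>_def using y A(6)[OF y(1) x20] by force
    qed
    hence "(SOME w. w \<in> orbit H2'grp \<psi> y) \<in> orbit H2'grp \<psi> y" by (rule someI)
    then obtain k where k: "k \<in> H2'" "(SOME w. w \<in> orbit H2'grp \<psi> y) = \<phi> k y x20"
      unfolding orbit_def H2'grp_def \<psi>_def using y by auto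
    have kc: "k \<in> carrier H2" using k sub by auto
    have "act1 h (\<phi> k y x20) = \<phi> k (act1 h y) x20"
      using commute[OF h kc yX] unfolding \<Gamma>1_def \<Gamma>2_def by simp
    hence R: "orbit_act (orbit H2'grp \<psi>) act1 h (F Q) = orbit H2'grp \<psi> (act1 h y)"
      unfolding orbit_act_def FQ k(2) using orb\<psi>[OF k(1) hy] by simp
    show ?thesis using L R by simp
  qed
  show ?thesis using bij eqv by blast
qed

end
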